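(* Every locally strongly bounded CB-generated Polish group is SB-generated.
   Context: A topological group is Polish if it is separable and completely metrizable. A subset of a topological group $G$ is coarsely bounded if it has finite diameter in every continuous left-invariant metric on $G$; $G$ is CB-generated if generated by a coarsely bounded subset. A subset of $G$ is strongly bounded if it has finite diameter in every left-invariant metric on $G$; $G$ is SB-generated if generated by a strongly bounded subset, and locally strongly bounded if some open neighborhood of the identity is strongly bounded. *)

theory Defs
  imports "HOL-Analysis.Analysis" "HOL-Algebra.Generated_Groups"
begin

definition topological_group :: "('a, 'b) monoid_scheme \<Rightarrow> 'a topology \<Rightarrow> bool" where
  "topological_group G X \<longleftrightarrow> group G \<and> topspace X = carrier G \<and>
     continuous_map (prod_topology X X) X (\<lambda>p. fst p \<otimes>\<^bsub>G\<^esub> snd p) \<and>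
     continuous_map X X (\<lambda>x. inv\<^bsub>G\<^esub> x)"

definition Polish_space :: "'a topology \<Rightarrow> bool" where
  "Polish_space X \<longleftrightarrow> separable_space X \<and> completely_metrizable_space X"

definition Polish_group :: "('a, 'b) monoid_scheme \<Rightarrow> 'a topology \<Rightarrow> bool" where
  "Polish_group G X \<longleftrightarrow> topological_group G X \<and> Polish_space X"

definition left_invariant_metric :: "('a, 'b) monoid_scheme \<Rightarrow> ('a \<Rightarrow> 'a \<Rightarrow> real) \<Rightarrow> bool" where
  "left_invariant_metric G d \<longleftrightarrow> Metric_space (carrier G) d \<and>
     (\<forall>g\<in>carrier G. \<forall>x\<in>carrier G. \<forall>y\<in>carrier G. d (g \<otimes>\<^bsub>G\<^esub> x) (g \<otimes>\<^bsub>G\<^esub> y) = d x y)"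

definition finite_diameter :: "('a \<Rightarrow> 'a \<Rightarrow> real) \<Rightarrow> 'a set \<Rightarrow> bool" where
  "finite_diameter d A \<longleftrightarrow> (\<exists>B. \<forall>x\<in>A. \<forall>y\<in>A. d x y \<le> B)"

definition coarsely_bounded :: "('a, 'b) monoid_scheme \<Rightarrow> 'a topology \<Rightarrow> 'a set \<Rightarrow> bool" where
  "coarsely_bounded G X A \<longleftrightarrow> A \<subseteq> carrier G \<and>
     (\<forall>d. left_invariant_metric G d \<and> continuous_map (prod_topology X X) euclideanreal (\<lambda>p. d (fst p) (snd p))
          \<longrightarrow> finite_diameter d A)"

definition strongly_bounded :: "('a, 'b) monoid_scheme \<Rightarrow> 'a set \<Rightarrow> bool" where
  "strongly_bounded G A \<longleftrightarrow> A \<subseteq> carrier G \<and>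
     (\<forall>d. left_invariant_metric G d \<longrightarrow> finite_diameter d A)"

definition CB_generated :: "('a, 'b) monoid_scheme \<Rightarrow> 'a topology \<Rightarrow> bool" where
  "CB_generated G X \<longleftrightarrow> (\<exists>A. coarsely_bounded G X A \<and> generate G A = carrier G)"

definition SB_generated :: "('a, 'b) monoid_scheme \<Rightarrow> bool" where
  "SB_generated G \<longleftrightarrow> (\<exists>A. strongly_bounded G A \<and> generate G A = carrier G)"

definition locally_strongly_bounded :: "('a, 'b) monoid_scheme \<Rightarrow> 'a topology \<Rightarrow> bool" where
  "locally_strongly_bounded G X \<longleftrightarrow>
     (\<exists>U. openin X U \<and> \<one>\<^bsub>G\<^esub> \<in> U \<and> strongly_bounded G U)"

end

theory Submission
  imports Defs
begin

definition lprod :: "('a, 'b) monoid_scheme \<Rightarrow> 'a list \<Rightarrow> 'a" where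
  "lprod G ws = foldr (\<lambda>x y. x \<otimes>\<^bsub>G\<^esub> y) ws \<one>\<^bsub>G\<^esub>"

context group begin

lemma lprod_Nil [simp]: "lprod G [] = \<one>" by (simp add: lprod_def)
lemma lprod_Cons [simp]: "lprod G (x # ws) = x \<otimes> lprod G ws" by (simp add: lprod_def)

lemma lprod_carrier [simp]: "set ws \<subseteq> carrier G \<Longrightarrow> lprod G ws \<in> carrier G"
  by (induction ws) auto

lemma lprod_append: "set ws \<subseteq> carrier G \<Longrightarrow> set vs \<subseteq> carrier G \<Longrightarrow>
   lprod G (ws @ vs) = lprod G ws \<otimes> lprod G vs"
  by (induction ws) (auto simp: m_assoc)

lemma lprod_rev_inv: "set ws \<subseteq> carrier G \<Longrightarrow> lprod G (rev (map (m_inv G) ws)) = inv (lprod G ws)"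
proof (induction ws)
  case Nil then show ?case by simp
next
  case (Cons x ws)
  then have "lprod G (rev (map (m_inv G) (x # ws))) = lprod G (rev (map (m_inv G) ws)) \<otimes> lprod G [inv x]"
  proof -
    have "set (rev (map (m_inv G) ws)) \<subseteq> carrier G" using Cons.prems by auto
    then show ?thesis using Cons.prems by (simp add: lprod_append)
  qed
  also have "\<dots> = inv (lprod G ws) \<otimes> inv x" using Cons by simp
  also have "\<dots> = inv (x \<otimes> lprod G ws)" using Cons by (simp add: inv_mult_group)
  finally show ?case by simp
qed

end

lemma discrete_ivt: "P 0 \<Longrightarrow> \<not> P n \<Longrightarrow> \<exists>i<n. P i \<and> \<not> P (Suc i)"
  by (induction n) (auto, metis less_Suc_eq)

locale bk = group G for G :: "('a, 'b) monoid_scheme" (structure) +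
  fixes X :: "'a topology" and V :: "nat \<Rightarrow> 'a set"
  assumes top: "topspace X = carrier G"
    and trans_open: "\<And>W c. openin X W \<Longrightarrow> c \<in> carrier G \<Longrightarrow> openin X {z \<in> carrier G. c \<otimes> z \<in> W}"
    and V0: "V 0 = carrier G"
    and Vopen: "\<And>n. openin X (V n)"
    and Vone: "\<And>n. \<one> \<in> V n"
    and Vsym: "\<And>n x. x \<in> V n \<Longrightarrow> inv x \<in> V n"
    and Vcube: "\<And>n x y z. x \<in> V (Suc n) \<Longrightarrow> y \<in> V (Suc n) \<Longrightarrow> z \<in> V (Suc n) \<Longrightarrow> x \<otimes> y \<otimes> z \<in> V n"
    and Vsep: "\<And>x. x \<in> carrier G \<Longrightarrow> x \<noteq> \<one> \<Longrightarrow> \<exists>n. x \<notin> V n"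
begin

lemma Vsub: "V n \<subseteq> carrier G"
  using openin_subset[OF Vopen] top by auto

lemma V_Suc: "V (Suc n) \<subseteq> V n"
proof
  fix x assume x: "x \<in> V (Suc n)"
  then have "x \<otimes> \<one> \<otimes> \<one> \<in> V n" using Vcube Vone by blast
  then show "x \<in> V n" using x Vsub[of "Suc n"] by auto
qed

lemma V_anti: "m \<le> n \<Longrightarrow> V n \<subseteq> V m"
  by (induction n rule: dec_induct) (use V_Suc in auto)

definition rho :: "'a \<Rightarrow> real" where
  "rho g = Inf ((\<lambda>n. (1/2::real)^n) ` {n. g \<in> V n})"

lemma rho_ne: "g \<in> carrier G \<Longrightarrow> (\<lambda>n. (1/2::real)^n) ` {n. g \<in> V n} \<noteq> {}"
  using V0 by auto

lemma rho_bdd: "bdd_below ((\<lambda>n. (1/2::real)^n) ` {n. g \<in> V n})"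
  by (rule bdd_belowI[of _ 0]) auto

lemma rho_nonneg: "g \<in> carrier G \<Longrightarrow> 0 \<le> rho g"
  unfolding rho_def by (rule cInf_greatest[OF rho_ne]) auto

lemma rho_le: "g \<in> V n \<Longrightarrow> rho g \<le> (1/2)^n"
  unfolding rho_def by (rule cInf_lower[OF _ rho_bdd]) auto

lemma rho_lt: assumes "g \<in> carrier G" "rho g < (1/2)^n" shows "g \<in> V (Suc n)"
proof -
  obtain k where k: "g \<in> V k" "(1/2::real)^k < (1/2)^n"
    using cInf_lessD[OF rho_ne[OF assms(1)] assms(2)[unfolded rho_def]] by auto
  then have "n < k" by (metis not_less power_decreasing_iff zero_less_divide_1_iff zero_less_numeral
        divide_less_eq_1_pos one_less_numeral_iff semiring_norm(76) zero_less_one)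
  then show ?thesis using V_anti[of "Suc n" k] k by auto
qed

lemma rho_inv: assumes "g \<in> carrier G" shows "rho (inv g) = rho g"
proof -
  have "{n. inv g \<in> V n} = {n. g \<in> V n}" using Vsym assms by (auto, metis inv_inv)
  then show ?thesis by (simp add: rho_def)
qed

lemma key: "set ws \<subseteq> carrier G \<Longrightarrow> sum_list (map rho ws) < (1/2)^n \<Longrightarrow> lprod G ws \<in> V n"
proof (induction "length ws" arbitrary: ws n rule: less_induct)
  case less
  show ?case
  proof (cases n)
    case 0 then show ?thesis using V0 less by simp
  next
    case (Suc m)
    show ?thesis
    proof (cases "ws = []")
      case True then show ?thesis using Vone by simp
    next
      case False
      define S where "S = sum_list (map rho ws)"
      have nn: "\<And>vs. set vs \<subseteq> carrier G \<Longrightarrow> 0 \<le> sum_list (map rho vs)"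
        by (rule sum_list_nonneg) (auto intro: rho_nonneg)
      have S0: "0 \<le> S" using nn less(2) S_def by auto
      obtain j where j: "j < length ws" "sum_list (map rho (take j ws)) \<le> S/2"
          "sum_list (map rho (drop (Suc j) ws)) \<le> S/2"
      proof (cases "S = 0")
        case True
        have "sum_list (map rho (drop 1 ws)) \<le> S"
        proof -
          have "S = sum_list (map rho (take 1 ws)) + sum_list (map rho (drop 1 ws))"
            by (simp add: S_def flip: sum_list_append map_append)
          moreover have "0 \<le> sum_list (map rho (take 1 ws))"
            using nn[of "take 1 ws"] less(2) by (meson order_trans set_take_subset)
          ultimately show ?thesis by linarith
        qed
        then show ?thesis using that[of 0] False True by auto
      next
        case Sne: False
        let ?P = "\<lambda>i. sum_list (map rho (take i ws)) \<le> S/2"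
        have "\<not> ?P (length ws)" using Sne S0 S_def by simp
        have "\<exists>i<length ws. ?P i \<and> \<not> ?P (Suc i)"
          by (rule discrete_ivt) (use S0 \<open>\<not> ?P (length ws)\<close> in auto)
        then obtain i where i: "i < length ws" "?P i" "\<not> ?P (Suc i)" by blast
        have "S = sum_list (map rho (take (Suc i) ws)) + sum_list (map rho (drop (Suc i) ws))"
          by (simp add: S_def flip: sum_list_append map_append)
        then show ?thesis using that[of i] i by linarith
      qed
      have ws: "ws = take j ws @ [ws ! j] @ drop (Suc j) ws"
        using j(1) by (simp add: id_take_nth_drop)
      have half: "S/2 < (1/2)^Suc n" using less(3) S_def by simp
      have c1: "set (take j ws) \<subseteq> carrier G" "set (drop (Suc j) ws) \<subseteq> carrier G" "ws ! j \<in> carrier G"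
        using less(2) j(1) by (auto dest: in_set_takeD in_set_dropD)
      have a: "lprod G (take j ws) \<in> V (Suc n)"
        using less(1)[of "take j ws" "Suc n"] c1 j half by auto
      have b: "lprod G (drop (Suc j) ws) \<in> V (Suc n)"
        using less(1)[of "drop (Suc j) ws" "Suc n"] c1 j half by auto
      have "rho (ws ! j) \<le> S"
      proof -
        have "S = sum_list (map rho (take j ws)) + rho (ws ! j) + sum_list (map rho (drop (Suc j) ws))"
          using ws S_def by (metis append_Cons append_Nil map_append sum_list_append
              list.simps(9) sum_list.Cons add.assoc)
        moreover have "0 \<le> sum_list (map rho (take j ws))" "0 \<le> sum_list (map rho (drop (Suc j) ws))"
          using nn c1 by auto
        ultimately show ?thesis by linarith
      qed
      then have c: "ws ! j \<in> V (Suc n)" using rho_lt[OF c1(3)] less(3) S_def by auto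
      have "lprod G ws = lprod G (take j ws) \<otimes> ws ! j \<otimes> lprod G (drop (Suc j) ws)"
        using c1 by (subst ws, subst lprod_append) (auto simp: m_assoc)
      then show ?thesis using Vcube[OF a c b] by simp
    qed
  qed
qed

end


context bk begin

definition reps :: "'a \<Rightarrow> real set" where
  "reps g = {sum_list (map rho ws) | ws. set ws \<subseteq> carrier G \<and> lprod G ws = g}"

definition N :: "'a \<Rightarrow> real" where "N g = Inf (reps g)"

lemma sum_nn: "set vs \<subseteq> carrier G \<Longrightarrow> 0 \<le> sum_list (map rho vs)"
  by (rule sum_list_nonneg) (auto intro: rho_nonneg)

lemma reps_ne: assumes "g \<in> carrier G" shows "reps g \<noteq> {}"
proof -
  have "sum_list (map rho [g]) \<in> reps g" using assms by (auto simp: reps_def intro!: exI[of _ "[g]"])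
  then show ?thesis by blast
qed

lemma reps_bdd: "bdd_below (reps g)"
  unfolding reps_def by (rule bdd_belowI[of _ 0]) (auto intro: sum_nn)

lemma N_le: "set ws \<subseteq> carrier G \<Longrightarrow> N (lprod G ws) \<le> sum_list (map rho ws)"
  unfolding N_def by (rule cInf_lower[OF _ reps_bdd]) (auto simp: reps_def)

lemma N_nonneg: "g \<in> carrier G \<Longrightarrow> 0 \<le> N g"
  unfolding N_def by (rule cInf_greatest[OF reps_ne]) (auto simp: reps_def intro: sum_nn)

lemma N_V: assumes "g \<in> V n" shows "N g \<le> (1/2)^n"
proof -
  have g: "g \<in> carrier G" using assms Vsub by auto
  have "N (lprod G [g]) \<le> rho g" using N_le[of "[g]"] g by simp
  then show ?thesis using g rho_le[OF assms] by simp
qed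

lemma N_one: "N \<one> = 0"
  using N_le[of "[]"] N_nonneg[of \<one>] by simp

lemma N_pos: assumes "g \<in> carrier G" "g \<noteq> \<one>" shows "0 < N g"
proof -
  obtain n where n: "g \<notin> V n" using Vsep assms by auto
  have "(1/2)^n \<le> N g"
    unfolding N_def
  proof (rule cInf_greatest[OF reps_ne[OF assms(1)]])
    fix x assume "x \<in> reps g"
    then obtain ws where "set ws \<subseteq> carrier G" "lprod G ws = g" "x = sum_list (map rho ws)"
      unfolding reps_def by blast
    then show "(1/2)^n \<le> x" using key[of ws n] n by force
  qed
  then show ?thesis by (smt (verit) zero_less_power zero_less_divide_1_iff)
qed

lemma N_mult: assumes "g \<in> carrier G" "h \<in> carrier G" shows "N (g \<otimes> h) \<le> N g + N h"
proof -
  have *: "N (g \<otimes> h) \<le> x + y" if xg: "x \<in> reps g" and yh: "y \<in> reps h" for x y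
  proof -
    obtain ws where ws: "set ws \<subseteq> carrier G" "lprod G ws = g" "x = sum_list (map rho ws)"
      using xg unfolding reps_def by blast
    obtain vs where vs: "set vs \<subseteq> carrier G" "lprod G vs = h" "y = sum_list (map rho vs)"
      using yh unfolding reps_def by blast
    have "N (lprod G (ws @ vs)) \<le> sum_list (map rho (ws @ vs))" using ws vs by (intro N_le) auto
    then show ?thesis using ws vs lprod_append by simp
  qed
  have "N (g \<otimes> h) - y \<le> N g" if "y \<in> reps h" for y
    unfolding N_def[of g] using * that by (intro cInf_greatest[OF reps_ne[OF assms(1)]]) force
  then have "N (g \<otimes> h) - N g \<le> N h"
    unfolding N_def[of h] by (intro cInf_greatest[OF reps_ne[OF assms(2)]]) force
  then show ?thesis by simp
qed

lemma N_inv_le: assumes "g \<in> carrier G" shows "N (inv g) \<le> N g"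
  unfolding N_def[of g]
proof (rule cInf_greatest[OF reps_ne[OF assms]])
  fix x assume "x \<in> reps g"
  then obtain ws where ws: "set ws \<subseteq> carrier G" "lprod G ws = g" "x = sum_list (map rho ws)"
    unfolding reps_def by blast
  have s: "set (rev (map (m_inv G) ws)) \<subseteq> carrier G" using ws by auto
  have "sum_list (map rho (rev (map (m_inv G) ws))) = sum_list (map rho ws)"
  proof -
    have "map rho (map (m_inv G) ws) = map rho ws" using ws(1) by (induction ws) (auto simp: rho_inv)
    then show ?thesis by (metis rev_map sum_list_rev)
  qed
  then show "N (inv g) \<le> x" using N_le[OF s] ws lprod_rev_inv by simp
qed

lemma N_inv: assumes "g \<in> carrier G" shows "N (inv g) = N g"
  using N_inv_le[OF assms] N_inv_le[of "inv g"] assms by simp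

definition e :: "'a \<Rightarrow> 'a \<Rightarrow> real" where
  "e x y = (if x \<in> carrier G \<and> y \<in> carrier G then N (inv x \<otimes> y) else 0)"

lemma e_metric: "Metric_space (carrier G) e"
proof
  fix x y show "0 \<le> e x y" by (simp add: e_def N_nonneg)
  show "e x y = e y x"
  proof (cases "x \<in> carrier G \<and> y \<in> carrier G")
    case True
    then have "inv (inv x \<otimes> y) = inv y \<otimes> x" by (simp add: inv_mult_group)
    then show ?thesis using True N_inv[of "inv x \<otimes> y"] by (simp add: e_def)
  qed (auto simp: e_def)
next
  fix x y assume xy: "x \<in> carrier G" "y \<in> carrier G"
  show "e x y = 0 \<longleftrightarrow> x = y"
  proof
    assume "e x y = 0"
    then have "inv x \<otimes> y = \<one>" using N_pos[of "inv x \<otimes> y"] xy by (auto simp: e_def)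
    then show "x = y" using xy by (metis inv_equality inv_inv inv_closed)
  qed (use xy N_one in \<open>simp add: e_def\<close>)
next
  fix x y z assume xyz: "x \<in> carrier G" "y \<in> carrier G" "z \<in> carrier G"
  have "inv x \<otimes> z = (inv x \<otimes> y) \<otimes> (inv y \<otimes> z)" using xyz
    by (simp add: m_assoc[symmetric]) (simp add: m_assoc)
  then show "e x z \<le> e x y + e y z" using xyz N_mult[of "inv x \<otimes> y" "inv y \<otimes> z"] by (simp add: e_def)
qed

lemma e_linv: "\<forall>g\<in>carrier G. \<forall>x\<in>carrier G. \<forall>y\<in>carrier G. e (g \<otimes> x) (g \<otimes> y) = e x y"
proof (intro ballI)
  fix g x y assume gxy: "g \<in> carrier G" "x \<in> carrier G" "y \<in> carrier G"
  have "inv (g \<otimes> x) \<otimes> (g \<otimes> y) = inv x \<otimes> y" using gxy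
    by (simp add: inv_mult_group m_assoc[symmetric]) (simp add: m_assoc)
  then show "e (g \<otimes> x) (g \<otimes> y) = e x y" using gxy by (simp add: e_def)
qed

lemma e_cont: "continuous_map (prod_topology X X) euclideanreal (\<lambda>p. e (fst p) (snd p))"
proof -
have "continuous_map (prod_topology X X) Met_TC.mtopology (\<lambda>p. e (fst p) (snd p))"
  unfolding Met_TC.continuous_map_to_metric
proof (intro ballI allI impI)
  fix p :: "'a \<times> 'a" and \<epsilon> :: real
  assume p: "p \<in> topspace (prod_topology X X)" and eps: "0 < \<epsilon>"
  obtain x y where xy: "p = (x, y)" "x \<in> carrier G" "y \<in> carrier G" using p top by auto
  obtain n where n: "(1/2::real)^n < \<epsilon>/2" using real_arch_pow_inv[of "\<epsilon>/2" "1/2"] eps by auto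
  define U1 where "U1 = {z \<in> carrier G. inv x \<otimes> z \<in> V n}"
  define U2 where "U2 = {z \<in> carrier G. inv y \<otimes> z \<in> V n}"
  have o: "openin X U1" "openin X U2" unfolding U1_def U2_def using trans_open Vopen xy by auto
  have "openin (prod_topology X X) (U1 \<times> U2)" using o by (simp add: openin_prod_Times_iff)
  moreover have "p \<in> U1 \<times> U2" using xy Vone by (simp add: U1_def U2_def)
  moreover have "\<forall>q\<in>U1 \<times> U2. e (fst q) (snd q) \<in> ball (e (fst p) (snd p)) \<epsilon>"
  proof
    fix q assume "q \<in> U1 \<times> U2"
    then obtain x' y' where q: "q = (x', y')" "x' \<in> U1" "y' \<in> U2" by auto
    have c: "x' \<in> carrier G" "y' \<in> carrier G" using q by (auto simp: U1_def U2_def)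
    interpret M: Metric_space "carrier G" e by (rule e_metric)
    have d1: "e x x' \<le> (1/2)^n" using q(2) xy c N_V by (simp add: U1_def e_def)
    have d2: "e y y' \<le> (1/2)^n" using q(3) xy c N_V by (simp add: U2_def e_def)
    have t1: "e x' y' \<le> e x' x + e x y + e y y'"
      using M.triangle[of x' x y'] M.triangle[of x y y'] xy c by linarith
    have t2: "e x y \<le> e x x' + e x' y' + e y' y"
      using M.triangle[of x x' y] M.triangle[of x' y' y] xy c by linarith
    show "e (fst q) (snd q) \<in> ball (e (fst p) (snd p)) \<epsilon>"
      using t1 t2 d1 d2 n M.commute[of x x'] M.commute[of y y'] xy q
      by (simp add: dist_real_def abs_less_iff)
  qed
  ultimately show "\<exists>U. openin (prod_topology X X) U \<and> p \<in> U \<and>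
      (\<forall>q\<in>U. e (fst q) (snd q) \<in> Met_TC.mball (e (fst p) (snd p)) \<epsilon>)" by auto
qed
then show ?thesis by simp
qed

end


context group begin

lemma tg_top: "topological_group G X \<Longrightarrow> topspace X = carrier G"
  by (simp add: topological_group_def)

lemma tg_lmult: assumes "topological_group G X" "c \<in> carrier G"
  shows "continuous_map X X (\<lambda>z. c \<otimes> z)"
proof -
  have m: "continuous_map (prod_topology X X) X (\<lambda>p. fst p \<otimes> snd p)"
    using assms(1) unfolding topological_group_def by blast
  have c: "continuous_map X X (\<lambda>z. c)"
    using assms tg_top[OF assms(1)] continuous_map_const[of X X c] by simp
  have "continuous_map X (prod_topology X X) (\<lambda>z. (c, z))"
    by (rule continuous_map_pairedI[OF c continuous_map_id[unfolded id_def]])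
  from continuous_map_compose[OF this m] show ?thesis by (simp add: o_def)
qed


lemma tg_trans_open: assumes "topological_group G X" "openin X W" "c \<in> carrier G"
  shows "openin X {z \<in> carrier G. c \<otimes> z \<in> W}"
proof -
  have "openin X {z \<in> topspace X. c \<otimes> z \<in> W}"
    by (rule openin_continuous_map_preimage[OF tg_lmult[OF assms(1,3)] assms(2)])
  then show ?thesis unfolding tg_top[OF assms(1)] .
qed

lemma tg_sq: assumes "topological_group G X" "openin X Ob" "\<one> \<in> Ob"
  shows "\<exists>W. openin X W \<and> \<one> \<in> W \<and> (\<forall>x\<in>W. \<forall>y\<in>W. x \<otimes> y \<in> Ob)"
proof -
  have m: "continuous_map (prod_topology X X) X (\<lambda>p. fst p \<otimes> snd p)"
    using assms(1) unfolding topological_group_def by blast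
  define P where "P = {p \<in> topspace (prod_topology X X). fst p \<otimes> snd p \<in> Ob}"
  have "openin (prod_topology X X) P"
    unfolding P_def by (rule openin_continuous_map_preimage[OF m assms(2)])
  moreover have "(\<one>, \<one>) \<in> P"
    using assms(3) tg_top[OF assms(1)] by (simp add: P_def)
  ultimately have "\<exists>U V. openin X U \<and> openin X V \<and> \<one> \<in> U \<and> \<one> \<in> V \<and> U \<times> V \<subseteq> P"
    unfolding openin_prod_topology_alt by (elim allE[of _ \<one>] impE) simp_all
  then obtain U V where UV: "openin X U" "openin X V" "\<one> \<in> U" "\<one> \<in> V"
    "U \<times> V \<subseteq> P" by blast
  have "\<forall>x\<in>U \<inter> V. \<forall>y\<in>U \<inter> V. x \<otimes> y \<in> Ob"
  proof (intro ballI)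
    fix x y assume "x \<in> U \<inter> V" "y \<in> U \<inter> V"
    then have "(x, y) \<in> P" using UV(5) by blast
    then show "x \<otimes> y \<in> Ob" by (simp add: P_def)
  qed
  moreover have "openin X (U \<inter> V)" using UV by blast
  moreover have "\<one> \<in> U \<inter> V" using UV by blast
  ultimately show ?thesis by blast
qed

lemma tg_nbhd: assumes "topological_group G X" "openin X Ob" "\<one> \<in> Ob"
  shows "\<exists>W. openin X W \<and> \<one> \<in> W \<and> W \<subseteq> Ob \<and> (\<forall>x\<in>W. inv x \<in> W) \<and>
     (\<forall>x\<in>W. \<forall>y\<in>W. \<forall>z\<in>W. x \<otimes> y \<otimes> z \<in> Ob)"
proof -
  have top: "topspace X = carrier G" using tg_top assms by auto
  obtain W1 where W1: "openin X W1" "\<one> \<in> W1" "\<forall>x\<in>W1. \<forall>y\<in>W1. x \<otimes> y \<in> Ob"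
    using tg_sq[OF assms] by blast
  obtain W2 where W2: "openin X W2" "\<one> \<in> W2" "\<forall>x\<in>W2. \<forall>y\<in>W2. x \<otimes> y \<in> W1"
    using tg_sq[OF assms(1) W1(1,2)] by blast
  define W' where "W' = W1 \<inter> W2 \<inter> Ob"
  have W'o: "openin X W'" using W1 W2 assms by (auto simp: W'_def)
  have W'c: "W' \<subseteq> carrier G" using openin_subset[OF W'o] top by auto
  have icont: "continuous_map X X (\<lambda>x. inv x)" using assms(1) by (simp add: topological_group_def)
  define W where "W = {x \<in> topspace X. x \<in> W' \<and> inv x \<in> W'}"
  have "openin X W"
  proof -
    have "W = W' \<inter> {x \<in> topspace X. inv x \<in> W'}" by (auto simp: W_def W'c top)
    then show ?thesis using openin_continuous_map_preimage[OF icont W'o] W'o by auto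
  qed
  moreover have "\<one> \<in> W" using W1 W2 assms by (auto simp: W_def W'_def top)
  moreover have "W \<subseteq> Ob" by (auto simp: W_def W'_def)
  moreover have "\<forall>x\<in>W. inv x \<in> W" using W'c by (auto simp: W_def top)
  moreover have "\<forall>x\<in>W. \<forall>y\<in>W. \<forall>z\<in>W. x \<otimes> y \<otimes> z \<in> Ob"
  proof (intro ballI)
    fix x y z assume "x \<in> W" "y \<in> W" "z \<in> W"
    then have xyz: "x \<in> W1" "y \<in> W2" "z \<in> W2" "x \<in> carrier G" "y \<in> carrier G" "z \<in> carrier G"
      using W'c by (auto simp: W_def W'_def)
    then have "x \<otimes> (y \<otimes> z) \<in> Ob" using W1 W2 by auto
    then show "x \<otimes> y \<otimes> z \<in> Ob" using xyz by (simp add: m_assoc)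
  qed
  ultimately show ?thesis by (intro exI[of _ W] conjI)
qed

lemma tg_metric: assumes "topological_group G X" "completely_metrizable_space X"
  shows "\<exists>e. left_invariant_metric G e \<and> continuous_map (prod_topology X X) euclideanreal (\<lambda>p. e (fst p) (snd p))"
proof -
  have top: "topspace X = carrier G" using tg_top assms by auto
  obtain M m where Mm: "Metric_space M m" "X = Metric_space.mtopology M m"
    using assms(2) unfolding completely_metrizable_space_def by blast
  interpret Mt: Metric_space M m by (rule Mm(1))
  have MG: "M = carrier G" using top Mm(2) by simp
  define P where "P = (\<lambda>(n::nat) W. openin X W \<and> \<one> \<in> W \<and> (\<forall>x\<in>W. inv x \<in> W) \<and> (n = 0 \<longrightarrow> W = carrier G))"
  define Q where "Q = (\<lambda>(n::nat) W W'. W' \<subseteq> Mt.mball \<one> (1 / real (Suc n)) \<and>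
      (\<forall>x\<in>W'. \<forall>y\<in>W'. \<forall>z\<in>W'. x \<otimes> y \<otimes> z \<in> W))"
  have "\<exists>f. \<forall>n. P n (f n) \<and> Q n (f n) (f (Suc n))"
  proof (rule dependent_nat_choice)
    show "\<exists>x. P 0 x" by (rule exI[of _ "carrier G"]) (use openin_topspace[of X] in \<open>auto simp: P_def top\<close>)
  next
    fix W n assume "P n W"
    then have W: "openin X W" "\<one> \<in> W" by (auto simp: P_def)
    have o1: "openin X (W \<inter> Mt.mball \<one> (1 / real (Suc n)))" using W Mm(2) by auto
    have "\<one> \<in> M" using MG by simp
    then have o2: "\<one> \<in> W \<inter> Mt.mball \<one> (1 / real (Suc n))" using W by simp
    obtain W' where W': "openin X W'" "\<one> \<in> W'" "W' \<subseteq> W \<inter> Mt.mball \<one> (1 / real (Suc n))"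
      "\<forall>x\<in>W'. inv x \<in> W'" "\<forall>x\<in>W'. \<forall>y\<in>W'. \<forall>z\<in>W'. x \<otimes> y \<otimes> z \<in> W \<inter> Mt.mball \<one> (1 / real (Suc n))"
      using tg_nbhd[OF assms(1) o1 o2] by blast
    show "\<exists>y. P (Suc n) y \<and> Q n W y"
      by (rule exI[of _ W']) (use W' in \<open>auto simp: P_def Q_def\<close>)
  qed
  then obtain V where V: "\<And>n. P n (V n)" "\<And>n. Q n (V n) (V (Suc n))" by blast
  interpret bk G X V
  proof
    show "topspace X = carrier G" by (rule top)
    show "\<And>W c. openin X W \<Longrightarrow> c \<in> carrier G \<Longrightarrow> openin X {z \<in> carrier G. c \<otimes> z \<in> W}"
      using tg_trans_open[OF assms(1)] by blast
    show "V 0 = carrier G" using V(1)[of 0] by (simp add: P_def)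
    show "\<And>n. openin X (V n)" "\<And>n. \<one> \<in> V n" "\<And>n x. x \<in> V n \<Longrightarrow> inv x \<in> V n"
      using V(1) by (auto simp: P_def)
    show "\<And>n x y z. x \<in> V (Suc n) \<Longrightarrow> y \<in> V (Suc n) \<Longrightarrow> z \<in> V (Suc n) \<Longrightarrow> x \<otimes> y \<otimes> z \<in> V n"
      using V(2) by (auto simp: Q_def)
  next
    fix x assume x: "x \<in> carrier G" "x \<noteq> \<one>"
    then have "0 < m \<one> x" using MG Mt.zero[of \<one> x] Mt.nonneg[of \<one> x] by auto
    then obtain n where n: "inverse (real (Suc n)) < m \<one> x" using reals_Archimedean by blast
    have "x \<notin> V (Suc n)"
    proof
      assume "x \<in> V (Suc n)"
      then have "x \<in> Mt.mball \<one> (1 / real (Suc n))" using V(2)[of n] by (auto simp: Q_def)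
      then show False using n by (simp add: inverse_eq_divide)
    qed
    then show "\<exists>n. x \<notin> V n" by blast
  qed
  show ?thesis
    by (rule exI[of _ e]) (simp add: left_invariant_metric_def e_metric e_linv e_cont)
qed

end


lemma sb_union:
  assumes G: "group G" and U: "strongly_bounded G U" "\<one>\<^bsub>G\<^esub> \<in> U" and F: "finite F" "F \<subseteq> carrier G"
  shows "strongly_bounded G (U \<union> F)"
  unfolding strongly_bounded_def
proof (intro conjI allI impI)
  show "U \<union> F \<subseteq> carrier G" using U F by (auto simp: strongly_bounded_def)
  fix d assume d: "left_invariant_metric G d"
  then interpret M: Metric_space "carrier G" d by (simp add: left_invariant_metric_def)
  obtain BU where BU: "\<forall>x\<in>U. \<forall>y\<in>U. d x y \<le> BU"
    using U d by (auto simp: strongly_bounded_def finite_diameter_def)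
  define R0 where "R0 = Max (insert 0 ((\<lambda>f. d f \<one>\<^bsub>G\<^esub>) ` F))"
  have R0: "0 \<le> R0" "\<And>f. f \<in> F \<Longrightarrow> d f \<one>\<^bsub>G\<^esub> \<le> R0" using F(1) by (auto simp: R0_def)
  have one: "\<one>\<^bsub>G\<^esub> \<in> carrier G" using G by (simp add: group.is_monoid monoid.one_closed)
  have b: "d x \<one>\<^bsub>G\<^esub> \<le> \<bar>BU\<bar> + R0" if "x \<in> U \<union> F" for x
    using that BU U(2) R0 by (auto, smt (verit), smt (verit))
  have "\<forall>x\<in>U \<union> F. \<forall>y\<in>U \<union> F. d x y \<le> 2 * (\<bar>BU\<bar> + R0)"
  proof (intro ballI)
    fix x y assume xy: "x \<in> U \<union> F" "y \<in> U \<union> F"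
    then have c: "x \<in> carrier G" "y \<in> carrier G" using \<open>U \<union> F \<subseteq> carrier G\<close> by auto
    have "d x y \<le> d x \<one>\<^bsub>G\<^esub> + d \<one>\<^bsub>G\<^esub> y" using M.triangle c one by blast
    then show "d x y \<le> 2 * (\<bar>BU\<bar> + R0)" using b[OF xy(1)] b[OF xy(2)] M.commute[of y "\<one>\<^bsub>G\<^esub>"] by (smt (verit))
  qed
  then show "finite_diameter d (U \<union> F)" unfolding finite_diameter_def by blast
qed



lemma (in group) main_result:
  assumes tg: "topological_group G X" and sep: "separable_space X" and cm: "completely_metrizable_space X"
    and "locally_strongly_bounded G X"
    and "CB_generated G X"
  shows "SB_generated G"
proof -
  have top: "topspace X = carrier G" using tg by (simp add: topological_group_def)
  obtain e where e: "left_invariant_metric G e"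
      "continuous_map (prod_topology X X) euclideanreal (\<lambda>p. e (fst p) (snd p))"
    using tg_metric[OF tg cm] by blast
  interpret Me: Metric_space "carrier G" e using e(1) by (simp add: left_invariant_metric_def)
  obtain U where U: "openin X U" "\<one> \<in> U" "strongly_bounded G U"
    using assms(4) by (auto simp: locally_strongly_bounded_def)
  have Uc: "U \<subseteq> carrier G" using openin_subset[OF U(1)] top by simp
  obtain A where A: "coarsely_bounded G X A" "generate G A = carrier G"
    using assms(5) by (auto simp: CB_generated_def)
  obtain C where C: "countable C" "C \<subseteq> carrier G" "X closure_of C = topspace X"
    using sep top by (auto simp: separable_space_def)
  have Cne: "C \<noteq> {}" using C(3) top by auto
  define dd where "dd = from_nat_into C"
  have ddC: "range dd = C" using C(1) Cne by (simp add: dd_def range_from_nat_into)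
  define H where "H = (\<lambda>n. generate G (U \<union> dd ` {..n}))"
  have Hs: "U \<union> dd ` {..n} \<subseteq> carrier G" for n using Uc C(2) ddC by auto
  have Hsub: "subgroup (H n) G" for n unfolding H_def by (rule generate_is_subgroup[OF Hs])
  have Hmono: "m \<le> n \<Longrightarrow> H m \<subseteq> H n" for m n
    unfolding H_def by (rule mono_generate) auto
  have UH: "U \<subseteq> H n" for n unfolding H_def by (auto intro: generate.incl)
  have ddH: "dd n \<in> H n" for n unfolding H_def by (auto intro: generate.incl)
  have Hcover: "\<exists>n. x \<in> H n" if x: "x \<in> carrier G" for x
  proof -
    define T where "T = {z \<in> carrier G. inv x \<otimes> z \<in> U}"
    have "openin X T" unfolding T_def by (rule tg_trans_open[OF tg U(1)]) (use x in simp)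
    moreover have "x \<in> T" using x U(2) by (simp add: T_def)
    ultimately have "C \<inter> T \<noteq> {}" using C(3) unfolding dense_intersects_open by blast
    then obtain c where "c \<in> C" "c \<in> T" by blast
    then obtain n where n: "dd n \<in> T" using ddC by blast
    define u where "u = inv x \<otimes> dd n"
    have u1: "u \<in> U" using n by (simp add: T_def u_def)
    have c: "dd n \<in> carrier G" "u \<in> carrier G" using n u1 Uc by (auto simp: T_def)
    have "x \<otimes> u = dd n" unfolding u_def using x c(1) by (simp add: m_assoc[symmetric])
    then have "dd n \<otimes> inv u = x" using x c by (metis m_assoc r_inv r_one inv_closed)
    moreover have "dd n \<otimes> inv u \<in> H n"
    proof -
      have "inv u \<in> H n" using UH[of n] u1 subgroup.m_inv_closed[OF Hsub[of n]] by blast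
      then show ?thesis using ddH[of n] subgroup.m_closed[OF Hsub[of n]] by blast
    qed
    ultimately show ?thesis by metis
  qed
  show ?thesis
  proof (cases "\<exists>N. A \<subseteq> H N")
    case True
    then obtain N where N: "A \<subseteq> H N" by blast
    have "carrier G \<subseteq> H N" using generate_subgroup_incl[OF N Hsub] A(2) by simp
    moreover have "H N \<subseteq> carrier G" using Hsub subgroup.subset by blast
    ultimately have "generate G (U \<union> dd ` {..N}) = carrier G" by (simp add: H_def)
    moreover have "strongly_bounded G (U \<union> dd ` {..N})"
    proof (rule sb_union)
      show "group G" by (rule is_group)
      show "strongly_bounded G U" "\<one> \<in> U" using U by auto
      show "finite (dd ` {..N})" by simp
      show "dd ` {..N} \<subseteq> carrier G" using C(2) ddC by auto
    qed
    ultimately show ?thesis unfolding SB_generated_def by blast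
  next
    case False
    define l where "l = (\<lambda>g. LEAST n. g \<in> H n)"
    have l_in: "g \<in> H (l g)" if "g \<in> carrier G" for g
      unfolding l_def using Hcover[OF that] by (rule LeastI_ex)
    have l_le: "g \<in> H n \<Longrightarrow> l g \<le> n" for g n unfolding l_def by (rule Least_le)
    have l_inv: "l (inv g) = l g" if g: "g \<in> carrier G" for g
    proof -
      have "inv g \<in> H n \<longleftrightarrow> g \<in> H n" for n
      proof
        assume "inv g \<in> H n"
        then have "inv (inv g) \<in> H n" by (rule subgroup.m_inv_closed[OF Hsub])
        then show "g \<in> H n" using g by simp
      qed (rule subgroup.m_inv_closed[OF Hsub])
      then show ?thesis by (simp add: l_def)
    qed
    have "\<one> \<in> H 0" by (rule subgroup.one_closed[OF Hsub])
    then have l_one: "l \<one> = 0" using l_le[of \<one> 0] by simp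
    have Hm: "a \<otimes> b \<in> H n" if "a \<in> H n" "b \<in> H n" for a b n
      by (rule subgroup.m_closed[OF Hsub that])
    have Hi: "inv a \<in> H n" if "a \<in> H n" for a n
      by (rule subgroup.m_inv_closed[OF Hsub that])
    have l_mult: "l (g \<otimes> h) \<le> l g + l h" if gh: "g \<in> carrier G" "h \<in> carrier G" for g h
    proof -
      have "H (l g) \<subseteq> H (l g + l h)" "H (l h) \<subseteq> H (l g + l h)" by (rule Hmono, simp)+
      then have "g \<in> H (l g + l h)" "h \<in> H (l g + l h)"
        using l_in[OF gh(1)] l_in[OF gh(2)] by blast+
      then have "g \<otimes> h \<in> H (l g + l h)" by (rule Hm)
      then show ?thesis by (rule l_le)
    qed
    have l_U: "l (inv u \<otimes> z \<otimes> u') = l z" if "u \<in> U" "u' \<in> U" "z \<in> carrier G" for u u' z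
    proof -
      have uc: "u \<in> carrier G" "u' \<in> carrier G" using that Uc by auto
      have "inv u \<otimes> z \<otimes> u' \<in> H n \<longleftrightarrow> z \<in> H n" for n
      proof
        assume "z \<in> H n"
        moreover have "u \<in> H n" "u' \<in> H n" using UH[of n] that by auto
        ultimately show "inv u \<otimes> z \<otimes> u' \<in> H n" by (intro Hm Hi)
      next
        assume h: "inv u \<otimes> z \<otimes> u' \<in> H n"
        have "u \<otimes> (inv u \<otimes> z \<otimes> u') \<otimes> inv u' = z" using uc that(3)
          by (simp add: m_assoc[symmetric]) (simp add: m_assoc)
        moreover have "u \<otimes> (inv u \<otimes> z \<otimes> u') \<otimes> inv u' \<in> H n"
        proof -
          have a: "u \<in> H n" "u' \<in> H n" using UH[of n] that by auto
          show ?thesis by (rule Hm[OF Hm[OF a(1) h] Hi[OF a(2)]])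
        qed
        ultimately show "z \<in> H n" by simp
      qed
      then show ?thesis by (simp add: l_def)
    qed
    define Lf where "Lf = (\<lambda>x y. if x \<in> carrier G \<and> y \<in> carrier G then real (l (inv x \<otimes> y)) else 0)"
    define DD where "DD = (\<lambda>x y. Lf x y + e x y)"
    have Lsym: "Lf x y = Lf y x" for x y
    proof (cases "x \<in> carrier G \<and> y \<in> carrier G")
      case True
      then have "inv (inv x \<otimes> y) = inv y \<otimes> x" by (simp add: inv_mult_group)
      then show ?thesis using True l_inv[of "inv x \<otimes> y"] by (simp add: Lf_def)
    qed (auto simp: Lf_def)
    have DDm: "Metric_space (carrier G) DD"
    proof
      fix x y show "0 \<le> DD x y" by (simp add: DD_def Lf_def)
      show "DD x y = DD y x" by (simp add: DD_def Lsym Me.commute)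
    next
      fix x y assume xy: "x \<in> carrier G" "y \<in> carrier G"
      show "DD x y = 0 \<longleftrightarrow> x = y"
      proof
        assume "DD x y = 0"
        then have s: "real (l (inv x \<otimes> y)) + e x y = 0" using xy by (simp add: DD_def Lf_def)
        have "e x y = 0" using s Me.nonneg[of x y] of_nat_0_le_iff[of "l (inv x \<otimes> y)"] by linarith
        then show "x = y" using Me.zero[OF xy] by blast
      qed (use xy l_one in \<open>simp add: DD_def Lf_def\<close>)
    next
      fix x y z assume xyz: "x \<in> carrier G" "y \<in> carrier G" "z \<in> carrier G"
      have "inv x \<otimes> z = (inv x \<otimes> y) \<otimes> (inv y \<otimes> z)" using xyz
        by (simp add: m_assoc[symmetric]) (simp add: m_assoc)
      then have "Lf x z \<le> Lf x y + Lf y z"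
        using xyz l_mult[of "inv x \<otimes> y" "inv y \<otimes> z"] by (simp add: Lf_def)
      then show "DD x z \<le> DD x y + DD y z" using Me.triangle[OF xyz] by (simp add: DD_def)
    qed
    have DDl: "\<forall>g\<in>carrier G. \<forall>x\<in>carrier G. \<forall>y\<in>carrier G. DD (g \<otimes> x) (g \<otimes> y) = DD x y"
    proof (intro ballI)
      fix g x y assume gxy: "g \<in> carrier G" "x \<in> carrier G" "y \<in> carrier G"
      have "inv (g \<otimes> x) \<otimes> (g \<otimes> y) = inv x \<otimes> y" using gxy
        by (simp add: inv_mult_group m_assoc[symmetric]) (simp add: m_assoc)
      then show "DD (g \<otimes> x) (g \<otimes> y) = DD x y"
        using gxy e(1) by (simp add: DD_def Lf_def left_invariant_metric_def)
    qed
    have Lc: "continuous_map (prod_topology X X) euclideanreal (\<lambda>p. Lf (fst p) (snd p))"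
    proof -
      have "continuous_map (prod_topology X X) Met_TC.mtopology (\<lambda>p. Lf (fst p) (snd p))"
        unfolding Met_TC.continuous_map_to_metric
      proof (intro ballI allI impI)
        fix p :: "'a \<times> 'a" and \<epsilon> :: real
        assume p: "p \<in> topspace (prod_topology X X)" and eps: "0 < \<epsilon>"
        obtain x y where xy: "p = (x, y)" "x \<in> carrier G" "y \<in> carrier G" using p top by auto
        define U1 where "U1 = {z \<in> carrier G. inv x \<otimes> z \<in> U}"
        define U2 where "U2 = {z \<in> carrier G. inv y \<otimes> z \<in> U}"
        have o: "openin X U1" "openin X U2" unfolding U1_def U2_def
          using tg_trans_open[OF tg U(1)] xy by auto
        have "openin (prod_topology X X) (U1 \<times> U2)" using o by (simp add: openin_prod_Times_iff)
        moreover have "p \<in> U1 \<times> U2" using xy U(2) by (simp add: U1_def U2_def)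
        moreover have "\<forall>q\<in>U1 \<times> U2. Lf (fst q) (snd q) \<in> Met_TC.mball (Lf (fst p) (snd p)) \<epsilon>"
        proof
          fix q assume "q \<in> U1 \<times> U2"
          then obtain x' y' where q: "q = (x', y')" "x' \<in> carrier G" "y' \<in> carrier G"
            "inv x \<otimes> x' \<in> U" "inv y \<otimes> y' \<in> U" by (auto simp: U1_def U2_def)
          define u where "u = inv x \<otimes> x'"
          define u' where "u' = inv y \<otimes> y'"
          have uU: "u \<in> U" "u' \<in> U" using q by (simp_all add: u_def u'_def)
          have uc: "u \<in> carrier G" "u' \<in> carrier G" using uU Uc by auto
          have ex: "x' = x \<otimes> u" "y' = y \<otimes> u'" using xy q
            by (simp_all add: u_def u'_def m_assoc[symmetric])
          have "inv (x \<otimes> u) \<otimes> (y \<otimes> u') = inv u \<otimes> (inv x \<otimes> y) \<otimes> u'"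
            using xy uc by (simp add: inv_mult_group m_assoc)
          then have "inv x' \<otimes> y' = inv u \<otimes> (inv x \<otimes> y) \<otimes> u'" using ex by simp
          then have "l (inv x' \<otimes> y') = l (inv x \<otimes> y)"
            using l_U[OF uU, of "inv x \<otimes> y"] xy by simp
          then show "Lf (fst q) (snd q) \<in> Met_TC.mball (Lf (fst p) (snd p)) \<epsilon>"
            using q xy eps by (simp add: Lf_def)
        qed
        ultimately show "\<exists>W. openin (prod_topology X X) W \<and> p \<in> W \<and>
          (\<forall>q\<in>W. Lf (fst q) (snd q) \<in> Met_TC.mball (Lf (fst p) (snd p)) \<epsilon>)" by blast
      qed
      then show ?thesis by simp
    qed
    have DDc: "continuous_map (prod_topology X X) euclideanreal (\<lambda>p. DD (fst p) (snd p))"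
      unfolding DD_def by (rule continuous_map_add[OF Lc e(2)])
    have "left_invariant_metric G DD" using DDm DDl by (simp add: left_invariant_metric_def)
    then obtain B where B: "\<forall>x\<in>A. \<forall>y\<in>A. DD x y \<le> B"
      using A(1) DDc by (auto simp: coarsely_bounded_def finite_diameter_def)
    have Ac: "A \<subseteq> carrier G" using A(1) by (simp add: coarsely_bounded_def)
    obtain a0 where a0: "a0 \<in> A" using False by blast
    define N where "N = l a0 + nat \<lceil>B\<rceil>"
    obtain a where a: "a \<in> A" "a \<notin> H N" using False by blast
    have ac: "a \<in> carrier G" "a0 \<in> carrier G" using a a0 Ac by auto
    have "DD a0 a \<le> B" using B a(1) a0 by blast
    moreover have "DD a0 a = real (l (inv a0 \<otimes> a)) + e a0 a" using ac by (simp add: DD_def Lf_def)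
    ultimately have "real (l (inv a0 \<otimes> a)) \<le> B" using Me.nonneg[of a0 a] by linarith
    then have "l (inv a0 \<otimes> a) \<le> nat \<lceil>B\<rceil>" by linarith
    moreover have "l a \<le> l a0 + l (inv a0 \<otimes> a)"
    proof -
      have "a = a0 \<otimes> (inv a0 \<otimes> a)" using ac by (simp add: m_assoc[symmetric])
      then show ?thesis using l_mult[of a0 "inv a0 \<otimes> a"] ac by simp
    qed
    ultimately have "l a \<le> N" by (simp add: N_def)
    then have "a \<in> H N" using l_in[OF ac(1)] Hmono by blast
    then show ?thesis using a by blast
  qed
qed

theorem corollary2p13:
  fixes G :: "('a, 'b) monoid_scheme" and X :: "'a topology"
  assumes "Polish_group G X"
    and "locally_strongly_bounded G X"
    and "CB_generated G X"
  shows "SB_generated G"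
proof -
  have tg: "topological_group G X" and sep: "separable_space X" and cm: "completely_metrizable_space X"
    using assms(1) by (auto simp: Polish_group_def Polish_space_def)
  have "group G" using tg by (simp add: topological_group_def)
  then show ?thesis using group.main_result[OF _ tg sep cm assms(2,3)] by blast
qed


end
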